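(* Let $G$ be a graph on $d+2$ vertices that is representable in $\mathbb{R}^d$ with ratio $k$. Then $G$ has a spherical representation in $\mathbb{R}^d$ with ratio $k$ if and only if both of the following hold: (3) $\det(xJ + B_G(k))$ is the zero polynomial in $x$; (4) there exists $r_0 \in \mathbb{R}$ such that $rJ + B_G(k)$ is positive semidefinite for all $r \geq r_0$.
   Context: Graphs are finite and simple with vertices labeled $1,\dots,d+2$. A finite set $S\subset\mathbb{R}^d$ is a 2-distance set if $\{\|p-q\| : p,q\in S, p\neq q\}$ has exactly two elements $\alpha_1>\alpha_2$; its distance ratio is $k=\alpha_1/\alpha_2$; its associated graph has vertex set $S$ with $p,q$ adjacent iff $\|p-q\|=\alpha_1$. $G$ is representable in $\mathbb{R}^d$ with ratio $k$ if some 2-distance set in $\mathbb{R}^d$ with ratio $k$ has associated graph $G$; it has a spherical representation with ratio $k$ if such a set can be chosen on a $(d-1)$-dimensional sphere in $\mathbb{R}^d$. $B_G(k)$ is the $(d+2)\times(d+2)$ matrix with $b_{ii}=0$, $b_{ij}=-1$ for non-adjacent $i\neq j$, $b_{ij}=-k^2$ for adjacent $i,j$. $J$ is the all-ones matrix. *)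

theory Defs
  imports "HOL-Analysis.Euclidean_Space" "Jordan_Normal_Form.Determinant"
    "HOL-Computational_Algebra.Polynomial"
begin

text \<open>Graphs on the vertex set {0..<d+2} (vertex i here is vertex i+1 of the paper),
  given by a symmetric irreflexive adjacency relation E.\<close>

definition simple_graph_on :: "nat \<Rightarrow> (nat \<Rightarrow> nat \<Rightarrow> bool) \<Rightarrow> bool" where
  "simple_graph_on N E \<longleftrightarrow>
     (\<forall>i<N. \<not> E i i) \<and> (\<forall>i<N. \<forall>j<N. E i j \<longleftrightarrow> E j i)"

definition two_distance_rep ::
  "nat \<Rightarrow> (nat \<Rightarrow> nat \<Rightarrow> bool) \<Rightarrow> real \<Rightarrow> (nat \<Rightarrow> 'a::euclidean_space) \<Rightarrow> bool" where
  "two_distance_rep N E k p \<longleftrightarrow>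
     inj_on p {0..<N} \<and>
     (\<exists>a1 a2. a1 > a2 \<and>
        {dist (p i) (p j) | i j. i < N \<and> j < N \<and> i \<noteq> j} = {a1, a2} \<and>
        k = a1 / a2 \<and>
        (\<forall>i<N. \<forall>j<N. i \<noteq> j \<longrightarrow> (E i j \<longleftrightarrow> dist (p i) (p j) = a1)))"

text \<open>G is representable in the space 'a (= R^d with d = DIM('a)) with ratio k.\<close>
definition representable :: "'a::euclidean_space itself \<Rightarrow> nat \<Rightarrow> (nat \<Rightarrow> nat \<Rightarrow> bool) \<Rightarrow> real \<Rightarrow> bool" where
  "representable _ N E k \<longleftrightarrow> (\<exists>p::nat \<Rightarrow> 'a. two_distance_rep N E k p)"

definition spherical_representable :: "'a::euclidean_space itself \<Rightarrow> nat \<Rightarrow> (nat \<Rightarrow> nat \<Rightarrow> bool) \<Rightarrow> real \<Rightarrow> bool" where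
  "spherical_representable _ N E k \<longleftrightarrow>
     (\<exists>p::nat \<Rightarrow> 'a. two_distance_rep N E k p \<and>
        (\<exists>c \<rho>. \<rho> > 0 \<and> (\<forall>i<N. dist (p i) c = \<rho>)))"

definition B_mat :: "nat \<Rightarrow> (nat \<Rightarrow> nat \<Rightarrow> bool) \<Rightarrow> real \<Rightarrow> real mat" where
  "B_mat N E k = mat N N (\<lambda>(i,j). if i = j then 0 else if E i j then - (k^2) else -1)"

definition J_mat :: "nat \<Rightarrow> 'b::one mat" where
  "J_mat N = mat N N (\<lambda>_. 1)"

definition psd :: "real mat \<Rightarrow> bool" where
  "psd A \<longleftrightarrow> A \<in> carrier_mat (dim_row A) (dim_row A) \<and>
     (\<forall>v \<in> carrier_vec (dim_row A). v \<bullet> (A *\<^sub>v v) \<ge> 0)"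

end

theory Submission
  imports Defs "HOL-Analysis.Linear_Algebra"
begin
lemma quad:
  fixes q :: "nat \<Rightarrow> 'a::real_inner" and v :: "nat \<Rightarrow> real"
  shows "(\<Sum>i<N. \<Sum>j<N. v i * v j * (r - (norm (q i - q j))\<^sup>2)) =
    r*(\<Sum>i<N. v i)\<^sup>2 - 2*(\<Sum>i<N. v i)*(\<Sum>i<N. v i * (norm (q i))\<^sup>2) + 2*(norm (\<Sum>i<N. v i *\<^sub>R q i))\<^sup>2"
proof -
  define a where "a i = (norm (q i))\<^sup>2" for i
  have e: "(norm (q i - q j))\<^sup>2 = a i + a j - 2 * inner (q i) (q j)" for i j
    by (simp add: a_def power2_norm_eq_inner inner_diff inner_commute)
  have n: "(norm (\<Sum>i<N. v i *\<^sub>R q i))\<^sup>2 = (\<Sum>i<N. \<Sum>j<N. v i * v j * inner (q i) (q j))"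
    apply (simp add: power2_norm_eq_inner inner_sum_left inner_sum_right sum_distrib_left)
    apply (subst sum.swap)
    apply (simp add: mult_ac)
    done
  have A1: "(\<Sum>i<N. \<Sum>j<N. v i * v j) = (\<Sum>i<N. v i)\<^sup>2"
    by (simp add: power2_eq_square sum_product)
  have A2: "(\<Sum>i<N. \<Sum>j<N. v i * v j * a i) = (\<Sum>i<N. v i) * (\<Sum>i<N. v i * a i)"
    by (subst sum.swap) (simp add: sum_product mult_ac)
  have A3: "(\<Sum>i<N. \<Sum>j<N. v i * v j * a j) = (\<Sum>i<N. v i) * (\<Sum>i<N. v i * a i)"
    by (simp add: sum_product mult_ac)
  have "(\<Sum>i<N. \<Sum>j<N. v i * v j * (r - (norm (q i - q j))\<^sup>2)) =
     r * (\<Sum>i<N. \<Sum>j<N. v i * v j) - (\<Sum>i<N. \<Sum>j<N. v i * v j * a i) - (\<Sum>i<N. \<Sum>j<N. v i * v j * a j)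
     + 2 * (\<Sum>i<N. \<Sum>j<N. v i * v j * inner (q i) (q j))"
    unfolding e by (simp add: algebra_simps sum.distrib sum_subtractf sum_distrib_left)
  then show ?thesis unfolding A1 A2 A3 n a_def[symmetric] by simp
qed
lemma affdep:
  fixes p :: "nat \<Rightarrow> 'a::euclidean_space"
  assumes inj: "inj_on p {..<N}" and N: "N > DIM('a) + 1"
  shows "\<exists>w. (\<exists>i<N. w i \<noteq> 0) \<and> (\<Sum>i<N. w i) = 0 \<and> (\<Sum>i<N. w i *\<^sub>R p i) = 0"
proof -
  define f where "f i = (p i, 1::real)" for i
  have injf: "inj_on f {..<N}" using inj unfolding f_def inj_on_def by auto
  let ?S = "f ` {..<N}"
  have cS: "card ?S = N" using card_image[OF injf] by simp
  have "dependent ?S"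
    by (rule dependent_biggerset) (use cS N in auto)
  then obtain u where u: "\<exists>v\<in>?S. u v \<noteq> 0" "(\<Sum>v\<in>?S. u v *\<^sub>R v) = 0"
    using real_vector.dependent_finite[of ?S] by auto
  define w where "w i = u (f i)" for i
  have s: "(\<Sum>i<N. w i *\<^sub>R f i) = 0"
    using u(2) unfolding w_def sum.reindex[OF injf] by (simp add: comp_def)
  have "(\<Sum>i<N. w i *\<^sub>R p i) = fst (\<Sum>i<N. w i *\<^sub>R f i)"
    by (simp add: fst_sum f_def)
  moreover have "(\<Sum>i<N. w i) = snd (\<Sum>i<N. w i *\<^sub>R f i)"
    by (simp add: snd_sum f_def)
  moreover have "\<exists>i<N. w i \<noteq> 0" using u(1) unfolding w_def by auto
  ultimately show ?thesis using s by auto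
qed

lemma rep_entries:
  assumes "two_distance_rep N E k p"
  obtains a2 where "a2 > 0" "inj_on p {..<N}"
    "\<And>i j. i<N \<Longrightarrow> j<N \<Longrightarrow> B_mat N E k $$ (i,j) = -((dist (p i) (p j))/a2)\<^sup>2"
proof -
  from assms obtain a1 a2 where inj: "inj_on p {0..<N}" and a: "a1 > a2"
    and S: "{dist (p i) (p j) | i j. i < N \<and> j < N \<and> i \<noteq> j} = {a1, a2}"
    and k: "k = a1/a2"
    and Ec: "\<forall>i<N. \<forall>j<N. i \<noteq> j \<longrightarrow> (E i j \<longleftrightarrow> dist (p i) (p j) = a1)"
    unfolding two_distance_rep_def by blast
  have inj': "inj_on p {..<N}" using inj by (simp add: atLeast0LessThan)
  have "a2 \<in> {dist (p i) (p j) | i j. i < N \<and> j < N \<and> i \<noteq> j}" using S by auto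
  then obtain i0 j0 where "i0<N" "j0<N" "i0\<noteq>j0" "a2 = dist (p i0) (p j0)" by blast
  hence a2: "a2 > 0" using inj' by (auto simp: inj_on_def)
  have "B_mat N E k $$ (i,j) = -((dist (p i) (p j))/a2)\<^sup>2" if ij: "i<N" "j<N" for i j
  proof (cases "i = j")
    case True then show ?thesis using ij by (simp add: B_mat_def)
  next
    case False
    show ?thesis
    proof (cases "E i j")
      case True
      then have "dist (p i) (p j) = a1" using Ec ij False by blast
      then show ?thesis using ij False True k by (simp add: B_mat_def power_divide)
    next
      case F: False
      have "dist (p i) (p j) \<in> {a1,a2}" unfolding S[symmetric] using ij False by blast
      moreover have "dist (p i) (p j) \<noteq> a1" using Ec ij False F by blast
      ultimately have "dist (p i) (p j) = a2" by blast
      then show ?thesis using ij False F a2 by (simp add: B_mat_def)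
    qed
  qed
  then show ?thesis using that a2 inj' by blast
qed

lemma psd_form:
  fixes q :: "nat \<Rightarrow> 'a::real_inner"
  assumes ent: "\<And>i j. i<N \<Longrightarrow> j<N \<Longrightarrow> B $$ (i,j) = -(norm (q i - q j))\<^sup>2"
    and B: "B \<in> carrier_mat N N"
    and v: "v \<in> carrier_vec N"
  shows "scalar_prod v ((smult_mat r (J_mat N) + B) *\<^sub>v v) =
    (\<Sum>i<N. \<Sum>j<N. v$i * v$j * (r - (norm (q i - q j))\<^sup>2))"
proof -
  have "scalar_prod v ((smult_mat r (J_mat N) + B) *\<^sub>v v) =
     (\<Sum>i<N. v$i * (\<Sum>j<N. (r - (norm (q i - q j))\<^sup>2) * v$j))"
  proof -
    have r: "((smult_mat r (J_mat N) + B) *\<^sub>v v) $ i = (\<Sum>j<N. (r - (norm (q i - q j))\<^sup>2) * v$j)"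
      if "i < N" for i
      using v B ent that
      by (auto simp: J_mat_def row_def atLeast0LessThan scalar_prod_def intro!: sum.cong)
    show ?thesis using v B r unfolding scalar_prod_def
      by (auto simp: atLeast0LessThan intro!: sum.cong)
  qed
  also have "\<dots> = (\<Sum>i<N. \<Sum>j<N. v$i * v$j * (r - (norm (q i - q j))\<^sup>2))"
    by (simp add: sum_distrib_left mult_ac)
  finally show ?thesis .
qed

lemma poly_det_eval:
  fixes P :: "real poly mat"
  shows "poly (det P) x = det (map_mat (\<lambda>p. poly p x) P)"
proof -
  interpret h: comm_ring_hom "\<lambda>p. poly p x"
    by unfold_locales auto
  show ?thesis by (rule h.hom_det[symmetric])
qed

lemma forward:
  fixes p :: "nat \<Rightarrow> 'a::euclidean_space"
  assumes rep: "two_distance_rep N E k p" and sph: "\<And>i. i<N \<Longrightarrow> dist (p i) c = \<rho>"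
    and N: "N > DIM('a) + 1"
  shows "det (smult_mat [:0, 1:] (J_mat N) + map_mat (\<lambda>b. [:b:]) (B_mat N E k)) = 0
      \<and> (\<exists>r0::real. \<forall>r\<ge>r0. psd (smult_mat r (J_mat N) + B_mat N E k))"
proof -
  obtain a2 where a2: "a2 > 0" and inj: "inj_on p {..<N}"
    and ent0: "\<And>i j. i<N \<Longrightarrow> j<N \<Longrightarrow> B_mat N E k $$ (i,j) = -((dist (p i) (p j))/a2)\<^sup>2"
    using rep_entries[OF rep] by blast
  define q where "q i = (1/a2) *\<^sub>R (p i - c)" for i
  define \<sigma> where "\<sigma> = \<rho> / a2"
  have qd: "norm (q i - q j) = dist (p i) (p j) / a2" for i j
  proof -
    have "q i - q j = (1/a2) *\<^sub>R (p i - p j)" unfolding q_def by (simp add: algebra_simps)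
    then show ?thesis using a2 by (simp add: dist_norm)
  qed
  have qn: "norm (q i) = \<sigma>" if "i < N" for i
    using sph[OF that] a2 unfolding q_def \<sigma>_def by (simp add: dist_norm)
  have ent: "\<And>i j. i<N \<Longrightarrow> j<N \<Longrightarrow> B_mat N E k $$ (i,j) = -(norm (q i - q j))\<^sup>2"
    using ent0 qd by simp
  have Bc: "B_mat N E k \<in> carrier_mat N N" by (simp add: B_mat_def)
  have form: "scalar_prod v ((smult_mat r (J_mat N) + B_mat N E k) *\<^sub>v v) =
      (r - 2*\<sigma>\<^sup>2) * (\<Sum>i<N. v$i)\<^sup>2 + 2*(norm (\<Sum>i<N. v$i *\<^sub>R q i))\<^sup>2"
    if v: "v \<in> carrier_vec N" for v r
  proof -
    have "(\<Sum>i<N. v$i * (norm (q i))\<^sup>2) = (\<Sum>i<N. v$i) * \<sigma>\<^sup>2"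
      using qn by (simp add: sum_distrib_right)
    moreover have "scalar_prod v ((smult_mat r (J_mat N) + B_mat N E k) *\<^sub>v v) =
      (\<Sum>i<N. \<Sum>j<N. v$i * v$j * (r - (norm (q i - q j))\<^sup>2))"
      by (rule psd_form[OF ent Bc v])
    ultimately show ?thesis
      by (simp only: quad) (simp add: algebra_simps power2_eq_square)
  qed
  have P4: "\<forall>r\<ge>2*\<sigma>\<^sup>2. psd (smult_mat r (J_mat N) + B_mat N E k)"
  proof (intro allI impI)
    fix r :: real assume r: "r \<ge> 2*\<sigma>\<^sup>2"
    show "psd (smult_mat r (J_mat N) + B_mat N E k)"
      unfolding psd_def
    proof (intro conjI ballI)
      show "smult_mat r (J_mat N) + B_mat N E k \<in> carrier_mat (dim_row (smult_mat r (J_mat N) + B_mat N E k))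
          (dim_row (smult_mat r (J_mat N) + B_mat N E k))"
        by (simp add: B_mat_def J_mat_def)
      fix v :: "real vec" assume "v \<in> carrier_vec (dim_row (smult_mat r (J_mat N) + B_mat N E k))"
      then have v: "v \<in> carrier_vec N" by (simp add: J_mat_def B_mat_def)
      show "0 \<le> scalar_prod v ((smult_mat r (J_mat N) + B_mat N E k) *\<^sub>v v)"
        unfolding form[OF v] using r by (intro add_nonneg_nonneg mult_nonneg_nonneg) auto
    qed
  qed
  obtain w where w: "\<exists>i<N. w i \<noteq> 0" "(\<Sum>i<N. w i) = 0" "(\<Sum>i<N. w i *\<^sub>R p i) = 0"
    using affdep[OF inj N] by blast
  have wq: "(\<Sum>i<N. w i *\<^sub>R q i) = 0"
  proof -
    have "(\<Sum>i<N. w i *\<^sub>R q i) = (1/a2) *\<^sub>R ((\<Sum>i<N. w i *\<^sub>R p i) - (\<Sum>i<N. w i) *\<^sub>R c)"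
      unfolding q_def by (simp add: scaleR_sum_right scaleR_sum_left sum_subtractf algebra_simps)
    then show ?thesis using w by simp
  qed
  have detx: "det (smult_mat x (J_mat N) + B_mat N E k) = 0" for x :: real
  proof -
    let ?M = "smult_mat x (J_mat N) + B_mat N E k"
    have Mc: "?M \<in> carrier_mat N N" by (simp add: B_mat_def J_mat_def)
    let ?v = "vec N w"
    have "?v \<noteq> 0\<^sub>v N" using w(1) by (auto simp: vec_eq_iff)
    moreover have "?M *\<^sub>v ?v = 0\<^sub>v N"
    proof (rule eq_vecI)
      fix i assume "i < dim_vec (0\<^sub>v N :: real vec)"
      then have i: "i < N" by simp
      have "(?M *\<^sub>v ?v) $ i = (\<Sum>j<N. (x - (norm (q i - q j))\<^sup>2) * w j)"
        using i ent by (auto simp: J_mat_def B_mat_def row_def scalar_prod_def atLeast0LessThan intro!: sum.cong)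
      also have "\<dots> = (\<Sum>j<N. (x - 2*\<sigma>\<^sup>2) * w j + 2 * (w j * inner (q i) (q j)))"
      proof (rule sum.cong[OF refl])
        fix j assume "j \<in> {..<N}"
        then have "(norm (q i - q j))\<^sup>2 = 2*\<sigma>\<^sup>2 - 2 * inner (q i) (q j)"
        proof -
          have "inner (q i) (q i) = \<sigma>\<^sup>2" "inner (q j) (q j) = \<sigma>\<^sup>2"
            using qn i \<open>j \<in> {..<N}\<close> by (simp_all flip: power2_norm_eq_inner)
          then show ?thesis by (simp add: power2_norm_eq_inner inner_diff inner_commute)
        qed
        then show "(x - (norm (q i - q j))\<^sup>2) * w j = (x - 2*\<sigma>\<^sup>2) * w j + 2 * (w j * inner (q i) (q j))"
          by (simp only:) (simp add: algebra_simps)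
      qed
      also have "\<dots> = (x - 2*\<sigma>\<^sup>2) * (\<Sum>j<N. w j) + 2 * inner (q i) (\<Sum>j<N. w j *\<^sub>R q j)"
        by (simp add: sum.distrib sum_distrib_left inner_sum_right)
      also have "\<dots> = 0" using w(2) wq by simp
      finally show "(?M *\<^sub>v ?v) $ i = 0\<^sub>v N $ i" using i by simp
    qed (simp add: J_mat_def B_mat_def)
    moreover have "?v \<in> carrier_vec N" by simp
    ultimately show ?thesis using det_0_iff_vec_prod_zero[OF Mc] by blast
  qed
  have "poly (det (smult_mat [:0, 1:] (J_mat N) + map_mat (\<lambda>b. [:b:]) (B_mat N E k))) x = 0" for x
  proof -
    have "map_mat (\<lambda>p. poly p x) (smult_mat [:0, 1:] (J_mat N) + map_mat (\<lambda>b. [:b:]) (B_mat N E k))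
        = smult_mat x (J_mat N) + B_mat N E k"
      by (rule eq_matI) (auto simp: J_mat_def B_mat_def)
    then show ?thesis unfolding poly_det_eval using detx by simp
  qed
  then have "det (smult_mat [:0, 1:] (J_mat N) + map_mat (\<lambda>b. [:b:]) (B_mat N E k)) = 0"
    using poly_all_0_iff_0 by blast
  then show ?thesis using P4 by blast
qed

lemma backward:
  fixes p :: "nat \<Rightarrow> 'a::euclidean_space"
  assumes rep: "two_distance_rep N E k p" and N: "N \<ge> 2"
    and ps: "psd (smult_mat r (J_mat N) + B_mat N E k)"
  shows "\<exists>c \<rho>. \<rho> > 0 \<and> (\<forall>i<N. dist (p i) c = \<rho>)"
proof -
  obtain a2 where a2: "a2 > 0" and inj: "inj_on p {..<N}"
    and ent0: "\<And>i j. i<N \<Longrightarrow> j<N \<Longrightarrow> B_mat N E k $$ (i,j) = -((dist (p i) (p j))/a2)\<^sup>2"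
    using rep_entries[OF rep] by blast
  define q where "q i = (1/a2) *\<^sub>R p i" for i
  define a where "a i = (norm (q i))\<^sup>2" for i
  have pq: "p i = a2 *\<^sub>R q i" for i using a2 unfolding q_def by simp
  have qd: "norm (q i - q j) = dist (p i) (p j) / a2" for i j
  proof -
    have "q i - q j = (1/a2) *\<^sub>R (p i - p j)" unfolding q_def by (simp add: algebra_simps)
    then show ?thesis using a2 by (simp add: dist_norm)
  qed
  have injq: "inj_on q {..<N}" using inj a2 unfolding q_def inj_on_def by auto
  have ent: "\<And>i j. i<N \<Longrightarrow> j<N \<Longrightarrow> B_mat N E k $$ (i,j) = -(norm (q i - q j))\<^sup>2"
    using ent0 qd by simp
  have Bc: "B_mat N E k \<in> carrier_mat N N" by (simp add: B_mat_def)
  have Q: "0 \<le> r*(\<Sum>i<N. f i)\<^sup>2 - 2*(\<Sum>i<N. f i)*(\<Sum>i<N. f i * a i) + 2*(norm (\<Sum>i<N. f i *\<^sub>R q i))\<^sup>2"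
    for f :: "nat \<Rightarrow> real"
  proof -
    have vc: "vec N f \<in> carrier_vec N" by simp
    have "0 \<le> scalar_prod (vec N f) ((smult_mat r (J_mat N) + B_mat N E k) *\<^sub>v vec N f)"
      using ps vc unfolding psd_def by (simp add: B_mat_def J_mat_def)
    also have "\<dots> = (\<Sum>i<N. \<Sum>j<N. vec N f $ i * vec N f $ j * (r - (norm (q i - q j))\<^sup>2))"
      by (rule psd_form[OF ent Bc vc])
    also have "\<dots> = (\<Sum>i<N. \<Sum>j<N. f i * f j * (r - (norm (q i - q j))\<^sup>2))"
      by (intro sum.cong refl) auto
    also have "\<dots> = r*(\<Sum>i<N. f i)\<^sup>2 - 2*(\<Sum>i<N. f i)*(\<Sum>i<N. f i * a i) + 2*(norm (\<Sum>i<N. f i *\<^sub>R q i))\<^sup>2"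
      unfolding quad a_def ..
    finally show ?thesis .
  qed
  have H: "(\<Sum>i<N. w i * a i) = 0" if w1: "(\<Sum>i<N. w i) = 0" and w2: "(\<Sum>i<N. w i *\<^sub>R q i) = 0" for w
  proof -
    define c where "c = (\<Sum>i<N. w i * a i)"
    define A where "A = (\<Sum>i<N. a i)"
    define Sq where "Sq = (\<Sum>i<N. q i)"
    define K where "K = r * (real N)\<^sup>2 - 2 * real N * A + 2 * (norm Sq)\<^sup>2"
    have T: "0 \<le> t\<^sup>2 * K - 2 * real N * t * c" for t
    proof -
      have s1: "(\<Sum>i<N. w i + t) = real N * t" using w1 by (simp add: sum.distrib)
      have s2: "(\<Sum>i<N. (w i + t) * a i) = c + t * A"
        unfolding c_def A_def by (simp add: algebra_simps sum.distrib sum_distrib_left)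
      have s3: "(\<Sum>i<N. (w i + t) *\<^sub>R q i) = t *\<^sub>R Sq"
        using w2 unfolding Sq_def by (simp add: scaleR_add_left sum.distrib scaleR_sum_right)
      have "0 \<le> r*(real N * t)\<^sup>2 - 2*(real N * t)*(c + t * A) + 2*(norm (t *\<^sub>R Sq))\<^sup>2"
        using Q[of "\<lambda>i. w i + t"] unfolding s1 s2 s3 .
      then show ?thesis unfolding K_def by (simp add: power2_eq_square algebra_simps)
    qed
    define D where "D = \<bar>K\<bar> + 1"
    have D: "D > 0" unfolding D_def by simp
    define X where "X = real N * c"
    have "0 \<le> (X/D)\<^sup>2 * K - 2 * real N * (X/D) * c" using T[of "X/D"] by simp
    also have "\<dots> = X\<^sup>2 * (K - 2*D) / D\<^sup>2"
      using D unfolding X_def by (simp add: field_simps power2_eq_square)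
    finally have "0 \<le> X\<^sup>2 * (K - 2*D)" using D by (simp add: zero_le_divide_iff)
    moreover have KD: "K - 2*D < 0" unfolding D_def by simp
    ultimately have "X\<^sup>2 * (K - 2*D) = 0"
      using mult_nonneg_nonpos[of "X\<^sup>2" "K-2*D"] by simp
    then have "X\<^sup>2 = 0" using KD by simp
    then have "X = 0" by simp
    then show ?thesis using N unfolding X_def c_def by simp
  qed
  define h where "h i = (q i, (1::real, a i))" for i
  have injh: "inj_on h {..<N}" using injq unfolding h_def inj_on_def by auto
  define e :: "'a \<times> real \<times> real" where "e = (0, (0, 1))"
  obtain y z where y: "y \<in> span (h ` {..<N})"
    and zo: "\<And>w. w \<in> span (h ` {..<N}) \<Longrightarrow> orthogonal z w" and ez: "e = y + z"
    using orthogonal_subspace_decomp_exists by blast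
  have z0: "z \<noteq> 0"
  proof
    assume "z = 0"
    then have "e \<in> span (h ` {..<N})" using y ez by simp
    then obtain u where "e = (\<Sum>v\<in>h ` {..<N}. u v *\<^sub>R v)"
      using span_finite[of "h ` {..<N}"] by auto
    then have eu: "e = (\<Sum>i<N. u (h i) *\<^sub>R h i)"
      unfolding sum.reindex[OF injh] by (simp add: comp_def)
    have "(\<Sum>i<N. u (h i) *\<^sub>R q i) = fst e" unfolding eu by (simp add: fst_sum h_def)
    moreover have "(\<Sum>i<N. u (h i)) = fst (snd e)" unfolding eu by (simp add: snd_sum fst_sum h_def)
    moreover have "(\<Sum>i<N. u (h i) * a i) = snd (snd e)" unfolding eu by (simp add: snd_sum h_def)
    ultimately show False using H[of "\<lambda>i. u (h i)"] unfolding e_def by simp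
  qed
  obtain z1 z2 z3 where zz: "z = (z1, (z2, z3))" by (cases z) auto
  have "inner z e = inner z y + inner z z" unfolding ez by (simp add: inner_add_right)
  moreover have "inner z y = 0" using zo[OF y] by (simp add: orthogonal_def)
  moreover have "inner z e = z3" unfolding zz e_def by simp
  ultimately have z3: "z3 > 0" using z0 by simp
  have hi: "inner z1 (q i) + z2 + z3 * a i = 0" if "i < N" for i
  proof -
    have "h i \<in> span (h ` {..<N})" using that by (intro span_base) auto
    then have "inner z (h i) = 0" using zo by (simp add: orthogonal_def)
    then show ?thesis unfolding zz h_def by simp
  qed
  define c0 where "c0 = (- 1/(2*z3)) *\<^sub>R z1"
  have dq: "(dist (q i) c0)\<^sup>2 = - z2/z3 + (norm c0)\<^sup>2" if "i < N" for i
  proof -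
    have e1: "(dist (q i) c0)\<^sup>2 = a i - 2 * inner (q i) c0 + (norm c0)\<^sup>2"
      unfolding a_def dist_norm by (simp add: power2_norm_eq_inner inner_diff inner_commute)
    have e2: "inner (q i) c0 = - inner z1 (q i) / (2*z3)"
      unfolding c0_def by (simp add: inner_commute)
    have e3: "inner z1 (q i) = - z2 - z3 * a i" using hi[OF that] by linarith
    have e4: "2 * (- (- z2 - z3 * a i) / (2*z3)) = z2/z3 + a i"
      using z3 by (simp add: field_simps)
    show ?thesis unfolding e1 e2 e3 e4 by simp
  qed
  have dq2: "dist (q i) c0 = dist (q 0) c0" if "i < N" for i
  proof -
    have "(dist (q i) c0)\<^sup>2 = (dist (q 0) c0)\<^sup>2" using dq[OF that] dq[of 0] N by simp
    then show ?thesis by (simp add: power2_eq_iff_nonneg)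
  qed
  define C where "C = a2 *\<^sub>R c0"
  have dp: "dist (p i) C = a2 * dist (q i) c0" for i
  proof -
    have "p i - C = a2 *\<^sub>R (q i - c0)" unfolding pq C_def by (simp add: algebra_simps)
    then show ?thesis using a2 by (simp add: dist_norm)
  qed
  have pos: "dist (q 0) c0 > 0"
  proof (rule ccontr)
    assume "\<not> dist (q 0) c0 > 0"
    then have d0: "dist (q 0) c0 = 0" by (simp add: not_less)
    have "1 < N" using N by simp
    then have "dist (q 1) c0 = 0" using dq2[of 1] d0 by linarith
    then have "q 1 = q 0" using d0 by simp
    moreover have "(0::nat) \<in> {..<N}" "(1::nat) \<in> {..<N}" using N by auto
    ultimately have "(1::nat) = 0" using inj_onD[OF injq] by blast
    then show False by simp
  qed
  have "a2 * dist (q 0) c0 > 0" using a2 pos by simp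
  moreover have "\<forall>i<N. dist (p i) C = a2 * dist (q 0) c0"
  proof (intro allI impI)
    fix i assume i: "i < N"
    show "dist (p i) C = a2 * dist (q 0) c0" unfolding dp dq2[OF i] ..
  qed
  ultimately show ?thesis by blast
qed

theorem lemma3p4:
  fixes E :: "nat \<Rightarrow> nat \<Rightarrow> bool" and k :: real and d :: nat
  assumes "d = DIM('a::euclidean_space)"
    and "simple_graph_on (d+2) E"
    and "representable TYPE('a) (d+2) E k"
  shows "spherical_representable TYPE('a) (d+2) E k \<longleftrightarrow>
     (det (smult_mat [:0, 1:] (J_mat (d+2)) + map_mat (\<lambda>b. [:b:]) (B_mat (d+2) E k)) = 0
      \<and> (\<exists>r0::real. \<forall>r\<ge>r0. psd (smult_mat r (J_mat (d+2)) + B_mat (d+2) E k)))"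
proof -
  from assms(3) obtain p :: "nat \<Rightarrow> 'a" where rep: "two_distance_rep (d+2) E k p"
    unfolding representable_def by blast
  have Nd: "d + 2 > DIM('a) + 1" using assms(1) by simp
  show ?thesis
  proof
    assume "spherical_representable TYPE('a) (d+2) E k"
    then obtain p' :: "nat \<Rightarrow> 'a" and c \<rho> where rep': "two_distance_rep (d+2) E k p'"
      and sph: "\<And>i. i < d+2 \<Longrightarrow> dist (p' i) c = \<rho>"
      unfolding spherical_representable_def by blast
    show "det (smult_mat [:0, 1:] (J_mat (d+2)) + map_mat (\<lambda>b. [:b:]) (B_mat (d+2) E k)) = 0
      \<and> (\<exists>r0::real. \<forall>r\<ge>r0. psd (smult_mat r (J_mat (d+2)) + B_mat (d+2) E k))"
      by (rule forward[OF rep' sph Nd])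
  next
    assume "det (smult_mat [:0, 1:] (J_mat (d+2)) + map_mat (\<lambda>b. [:b:]) (B_mat (d+2) E k)) = 0
      \<and> (\<exists>r0::real. \<forall>r\<ge>r0. psd (smult_mat r (J_mat (d+2)) + B_mat (d+2) E k))"
    then obtain r0 :: real where "\<forall>r\<ge>r0. psd (smult_mat r (J_mat (d+2)) + B_mat (d+2) E k)" by blast
    then have ps: "psd (smult_mat r0 (J_mat (d+2)) + B_mat (d+2) E k)" by simp
    obtain c \<rho> where "\<rho> > 0" "\<forall>i<d+2. dist (p i) c = \<rho>"
      using backward[OF rep _ ps] by auto
    then show "spherical_representable TYPE('a) (d+2) E k"
      unfolding spherical_representable_def using rep by blast
  qed
qed

end
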